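(* For all integers $m,n\ge 0$, $$\frac{1}{n!}D_{m+n}=\sum_{l=0}^{n}\sum_{k=0}^{m}\binom{k+n-l-1}{n-l}\binom{m}{k}(-1)^{m-k}\frac{k!}{l!}\,D_l,$$ where $D_j$ denotes the $j$-th derangement number.
   Context: For a nonnegative integer $j$, the derangement number is $D_j=j!\sum_{i=0}^{j}\frac{(-1)^i}{i!}$ (the number of permutations of a $j$-element set with no fixed points); equivalently $\frac{e^{-t}}{1-t}=\sum_{j\ge 0}D_j\frac{t^j}{j!}$. Binomial coefficients are the generalized ones: for any real (or integer, possibly negative) $a$ and integer $j\ge 0$, $\binom{a}{j}=\frac{a(a-1)\cdots(a-j+1)}{j!}$, with $\binom{a}{0}=1$; in particular $\binom{-1}{0}=1$. *)

theory Defs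
  imports Complex_Main
begin

definition derangement :: "nat \<Rightarrow> real" where
  "derangement j = fact j * (\<Sum>i=0..j. (-1) ^ i / fact i)"

end

theory Submission
  imports Defs "HOL-Computational_Algebra.Formal_Power_Series"
begin

unbundle fps_syntax

lemma binom_diff_step:
  fixes x :: "nat \<Rightarrow> 'a::comm_ring_1"
  shows "(\<Sum>k=0..m. of_nat (m choose k) * (-1)^(m-k) * (x (Suc k) - x k)) =
         (\<Sum>k=0..Suc m. of_nat (Suc m choose k) * (-1)^(Suc m - k) * x k)"
proof -
  have "(\<Sum>k=0..Suc m. of_nat (Suc m choose k) * (-1)^(Suc m - k) * x k) =
        (\<Sum>k=0..Suc m. of_nat (m choose k) * (-1)^(Suc m - k) * x k) +
        (\<Sum>k=1..Suc m. of_nat (m choose (k - 1)) * (-1)^(Suc m - k) * x k)"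
  proof -
    have "(\<Sum>k=0..Suc m. of_nat (Suc m choose k) * (-1)^(Suc m - k) * x k) =
        (\<Sum>k=0..Suc m. of_nat (m choose k) * (-1)^(Suc m - k) * x k) +
        (\<Sum>k=0..Suc m. of_nat (if k = 0 then 0 else m choose (k - 1)) * (-1)^(Suc m - k) * x k)"
      apply (subst sum.distrib[symmetric], rule sum.cong, simp)
      subgoal for k by (cases k) (simp_all add: algebra_simps)
      done
    also have "(\<Sum>k=0..Suc m. of_nat (if k = 0 then 0 else m choose (k - 1)) * (-1)^(Suc m - k) * x k)
       = (\<Sum>k=1..Suc m. of_nat (m choose (k - 1)) * (-1)^(Suc m - k) * x k)"
      by (subst sum.atLeast_Suc_atMost) auto
    finally show ?thesis .
  qed
  also have "(\<Sum>k=0..Suc m. of_nat (m choose k) * (-1)^(Suc m - k) * x k) =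
     - (\<Sum>k=0..m. of_nat (m choose k) * (-1)^(m - k) * x k)"
    by (simp add: sum_negf[symmetric] Suc_diff_le binomial_eq_0)
  also have "(\<Sum>k=1..Suc m. of_nat (m choose (k - 1)) * (-1)^(Suc m - k) * x k) =
      (\<Sum>k=0..m. of_nat (m choose k) * (-1)^(m - k) * x (Suc k))"
    using sum.shift_bounds_cl_Suc_ivl[of "\<lambda>k. of_nat (m choose (k - 1)) * (-1)^(Suc m - k) * x k" 0 m]
    by simp
  finally show ?thesis
    by (simp add: sum_subtractf algebra_simps)
qed

definition gg :: "real fps" where "gg = Abs_fps (\<lambda>_. 1)"
definition EE :: "real fps" where "EE = fps_exp (-1)"

lemma gg_nth[simp]: "gg $ n = 1" by (simp add: gg_def)

lemma deriv_gg: "fps_deriv gg = gg * gg"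
  by (rule fps_ext) (simp add: fps_mult_nth)

lemma gg_pow_nth: "(gg ^ k) $ r = (real k + real r - 1) gchoose r"
proof (induction k arbitrary: r)
  case 0
  show ?case
  proof (cases r)
    case 0 then show ?thesis by simp
  next
    case (Suc s)
    have "(real 0 + real r - 1) = of_nat s" using Suc by simp
    then have "(real 0 + real r - 1) gchoose r = of_nat (s choose r)"
      by (simp add: binomial_gbinomial)
    then show ?thesis using Suc by simp
  qed
next
  case (Suc k)
  have "(gg ^ Suc k) $ r = (\<Sum>i=0..r. (gg^k) $ i)"
    by (simp add: fps_mult_nth power_Suc2 del: power_Suc)
  also have "\<dots> = (\<Sum>i\<le>r. (real k - 1 + of_nat i) gchoose i)"
    using Suc by (simp add: atLeast0AtMost algebra_simps)
  also have "\<dots> = (real k - 1 + of_nat r + 1) gchoose r"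
    by (rule gbinomial_parallel_sum)
  finally show ?case by (simp add: algebra_simps)
qed

definition AA :: "nat \<Rightarrow> real fps" where
  "AA k = fps_const (fact k) * gg ^ Suc k * EE"

lemma deriv_AA: "fps_deriv (AA k) = AA (Suc k) - AA k"
proof -
  have "fps_deriv (gg ^ Suc k) = fps_const (real (Suc k)) * gg ^ Suc (Suc k)"
    by (simp only: fps_deriv_power deriv_gg) (simp add: algebra_simps power_Suc2 del: power_Suc)
  moreover have "fps_const (fact (Suc k)) = fps_const (fact k) * fps_const (real (Suc k))"
    by (metis fact_Suc fps_const_mult mult.commute)
  moreover have "fps_const (-1::real) = -1" by (metis fps_const_neg fps_const_1_eq_1)
  ultimately show ?thesis
    unfolding AA_def EE_def
    by (simp only: fps_deriv_mult fps_deriv_const fps_exp_deriv) (simp add: algebra_simps del: power_Suc fact_Suc fps_const_mult)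
qed

definition QQ :: "nat \<Rightarrow> real fps" where
  "QQ m = (\<Sum>k=0..m. fps_const (real (m choose k) * (-1)^(m-k)) * AA k)"

lemma const_m1: "fps_const ((-1::real)^j) = (-1)^j"
proof (induction j)
  case (Suc j)
  have "fps_const ((-1::real)^Suc j) = fps_const (-1) * fps_const ((-1::real)^j)"
    by (simp only: fps_const_mult power_Suc)
  also have "\<dots> = (-1) ^ Suc j" using Suc by (metis fps_const_neg fps_const_1_eq_1 mult_minus1 power_Suc)
  finally show ?case .
qed simp

lemma const_conv: "fps_const (real c * (-1)^j) = (of_nat c * (-1)^j :: real fps)"
  by (simp only: fps_const_mult[symmetric] const_m1 fps_of_nat)

lemma iter_QQ: "(fps_deriv ^^ m) (gg * EE) = QQ m"
proof (induction m)
  case 0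
  then show ?case by (simp add: QQ_def AA_def)
next
  case (Suc m)
  have "(fps_deriv ^^ Suc m) (gg * EE) = fps_deriv (QQ m)" using Suc by simp
  also have "\<dots> = (\<Sum>k=0..m. fps_const (real (m choose k) * (-1)^(m-k)) * (AA (Suc k) - AA k))"
    unfolding QQ_def fps_deriv_sum by (simp add: deriv_AA del: fps_const_mult)
  also have "\<dots> = QQ (Suc m)"
    unfolding QQ_def const_conv by (rule binom_diff_step)
  finally show ?case .
qed

lemma F_nth: "(gg * EE) $ l = derangement l / fact l"
proof -
  have "(gg * EE) $ l = (\<Sum>i=0..l. EE $ (l - i))" by (simp add: fps_mult_nth)
  also have "\<dots> = (\<Sum>i=0..l. EE $ i)"
    by (rule sum.atLeastAtMost_rev[of "\<lambda>i. EE $ i" 0 l, simplified, symmetric])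
  also have "\<dots> = derangement l / fact l"
    by (simp add: EE_def derangement_def)
  finally show ?thesis .
qed

lemma iter_nth: "((fps_deriv ^^ m) f) $ n = fact (m + n) / fact n * (f $ (m + n) :: real)"
proof (induction m arbitrary: n)
  case 0 then show ?case by simp
next
  case (Suc m)
  have "((fps_deriv ^^ Suc m) f) $ n = real (n + 1) * ((fps_deriv ^^ m) f) $ (n + 1)" by simp
  also have "\<dots> = real (n + 1) * (fact (m + Suc n) / fact (Suc n) * f $ (m + Suc n))"
    using Suc by simp
  also have "\<dots> = fact (Suc m + n) / fact n * f $ (Suc m + n)"
  proof -
    have c: "c \<noteq> 0 \<Longrightarrow> c * (A / (c * F) * X) = A / F * (X::real)" for c A F X
      by (cases "F = 0") (simp_all add: field_simps)
    have e2: "fact (Suc n) = real (n+1) * (fact n :: real)" by simp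
    have e1: "m + Suc n = Suc m + n" by simp
    show ?thesis unfolding e1 e2 by (rule c) simp
  qed
  finally show ?case .
qed

theorem theorem2p1:
  fixes m n :: nat
  shows "derangement (m + n) / fact n =
    (\<Sum>l=0..n. \<Sum>k=0..m.
       ((real k + real n - real l - 1) gchoose (n - l)) * real (m choose k) * (-1) ^ (m - k)
       * fact k / fact l * derangement l)"
proof -
  have "derangement (m + n) / fact n = ((fps_deriv ^^ m) (gg * EE)) $ n"
    by (simp add: iter_nth F_nth)
  also have "\<dots> = QQ m $ n" by (simp add: iter_QQ)
  also have "\<dots> = (\<Sum>k=0..m. real (m choose k) * (-1)^(m-k) * fact k *
        (\<Sum>l=0..n. (gg * EE) $ l * (gg ^ k) $ (n - l)))"
  proof -
    have "AA k $ n = fact k * (\<Sum>l=0..n. (gg * EE) $ l * (gg ^ k) $ (n - l))" for k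
    proof -
      have "AA k = fps_const (fact k) * ((gg * EE) * gg ^ k)"
        by (simp add: AA_def algebra_simps)
      then have "AA k $ n = fact k * ((gg * EE) * gg ^ k) $ n"
        by (simp only: fps_mult_left_const_nth)
      then show ?thesis by (simp only: fps_mult_nth[of "gg * EE"])
    qed
    then show ?thesis by (simp add: QQ_def fps_sum_nth mult.assoc)
  qed
  also have "\<dots> = (\<Sum>k=0..m. \<Sum>l=0..n.
       ((real k + real n - real l - 1) gchoose (n - l)) * real (m choose k) * (-1) ^ (m - k)
       * fact k / fact l * derangement l)"
    by (auto simp: sum_distrib_left F_nth gg_pow_nth of_nat_diff add_diff_eq intro!: sum.cong)
  finally show ?thesis by (rule trans[OF _ sum.swap])
qed

end
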